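(* Let $p\ge1$, $m\in\mathbb{N}$, $a,b>0$, $\beta\in\mathbb{R}^p$, let $\xi$ be a design on $\mathcal{X}$, and let $G$ be any real $p\times p$ matrix. Then the matrix $\frac{b}{a}G+\frac{m}{a}e_1e_1^T$ is a generalized inverse of $M(\xi;\beta)$ (i.e. $M(\xi;\beta)\bigl(\frac{b}{a}G+\frac{m}{a}e_1e_1^T\bigr)M(\xi;\beta)=M(\xi;\beta)$) if and only if $G$ is a generalized inverse of $M_{Po}(\xi;\beta)$ (i.e. $M_{Po}(\xi;\beta)GM_{Po}(\xi;\beta)=M_{Po}(\xi;\beta)$).
   Context: Let $\mathcal{X}\subseteq\mathbb{R}^k$ be a design region and $f=(1,f_1,\ldots,f_{p-1})^T:\mathcal{X}\to\mathbb{R}^p$ a vector of regression functions whose first component is the constant 1. A design $\xi$ is a probability measure on $\mathcal{X}$ with finite support $x_1,\ldots,x_l$ and weights $w_1,\ldots,w_l\ge0$, $\sum_j w_j=1$. The Poisson information matrix is $M_{Po}(\xi;\beta)=\sum_{j=1}^l w_j\exp(f(x_j)^T\beta)f(x_j)f(x_j)^T$, and the Poisson–Gamma information matrix is $M(\xi;\beta)=\frac{a}{b}\Bigl(M_{Po}(\xi;\beta)-\frac{M_{Po}(\xi;\beta)e_1e_1^TM_{Po}(\xi;\beta)}{e_1^TM_{Po}(\xi;\beta)e_1+b/m}\Bigr)$, where $e_1$ is the first standard unit vector of $\mathbb{R}^p$. *)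

theory Defs
  imports "HOL-Analysis.Analysis"
begin

definition outer :: "real^'p \<Rightarrow> real^'p \<Rightarrow> real^'p^'p" where
  "outer u v = (\<chi> i j. u $ i * v $ j)"

text \<open>Poisson information matrix of the design with support points xs 0..l-1 and
  weights w 0..l-1.\<close>
definition M_Po :: "('x \<Rightarrow> real^'p) \<Rightarrow> nat \<Rightarrow> (nat \<Rightarrow> 'x) \<Rightarrow> (nat \<Rightarrow> real)
    \<Rightarrow> real^'p \<Rightarrow> real^'p^'p" where
  "M_Po f l xs w \<beta> = (\<Sum>j<l. (w j * exp (f (xs j) \<bullet> \<beta>)) *\<^sub>R outer (f (xs j)) (f (xs j)))"

text \<open>Poisson--Gamma information matrix; e1 is the first standard unit vector.\<close>
definition M_PG :: "real \<Rightarrow> real \<Rightarrow> nat \<Rightarrow> real^'p \<Rightarrow> real^'p^'p \<Rightarrow> real^'p^'p" where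
  "M_PG a b m e1 MP = (a / b) *\<^sub>R
     (MP - (1 / (e1 \<bullet> (MP *v e1) + b / real m)) *\<^sub>R (MP ** outer e1 e1 ** MP))"

end

theory Submission
  imports Defs
begin

lemma mrd: "((A::real^'n^'m) + B) ** (C::real^'k^'n) = A ** C + B ** C"
  by (vector matrix_matrix_mult_def sum.distrib[symmetric] field_simps)
lemma mdl: "(A::real^'n^'m) ** ((B::real^'k^'n) - C) = A ** B - A ** C"
  by (vector matrix_matrix_mult_def sum_subtractf[symmetric] field_simps)
lemma mdr: "((A::real^'n^'m) - B) ** (C::real^'k^'n) = A ** C - B ** C"
  by (vector matrix_matrix_mult_def sum_subtractf[symmetric] field_simps)
lemma msl: "(k *\<^sub>R (A::real^'n^'m)) ** (B::real^'k^'n) = k *\<^sub>R (A ** B)"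
  by (simp add: matrix_matrix_mult_def sum_distrib_left mult_ac vec_eq_iff scaleR_sum_right)
lemma msr: "(A::real^'n^'m) ** (k *\<^sub>R (B::real^'k^'n)) = k *\<^sub>R (A ** B)"
  by (simp add: matrix_matrix_mult_def sum_distrib_left mult_ac vec_eq_iff scaleR_sum_right)

lemma two_m: "(2::real^'n^'m) * X = (2::real) *\<^sub>R X"
  unfolding scaleR_2 by (rule mult_2)

lemmas mm = matrix_add_ldistrib mrd mdl mdr msl msr matrix_mul_assoc

lemma key:
  fixes P G E :: "real^'n^'n"
  assumes EE: "E ** E = E" and EPE: "E ** P ** E = \<alpha> *\<^sub>R E"
    and c: "\<alpha> + d > 0" and d: "d > 0"
  defines "s \<equiv> 1 / (\<alpha> + d)"
  defines "Q \<equiv> P - s *\<^sub>R (P ** E ** P)"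
  shows "Q ** G ** Q + (1/d) *\<^sub>R (Q ** E ** Q) = Q \<longleftrightarrow> P ** G ** P = P"
proof -
  define t where "t = 1 - s * \<alpha>"
  have t: "t = d * s" "t > 0" "s > 0" using c d unfolding t_def s_def by (auto simp: field_simps)
  have EE': "X ** E ** E = X ** E" for X :: "real^'n^'n"
    by (metis EE matrix_mul_assoc)
  have EPE': "X ** E ** P ** E = \<alpha> *\<^sub>R (X ** E)" for X :: "real^'n^'n"
    by (metis EPE matrix_mul_assoc msr)
  define A where "A = (mat 1::real^'n^'n) - s *\<^sub>R (P ** E)"
  define B where "B = (mat 1::real^'n^'n) - s *\<^sub>R (E ** P)"
  define A' where "A' = (mat 1::real^'n^'n) + (s/t) *\<^sub>R (P ** E)"
  define B' where "B' = (mat 1::real^'n^'n) + (s/t) *\<^sub>R (E ** P)"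
  have "A' ** A = mat 1 + (s/t - s - (s/t) * s * \<alpha>) *\<^sub>R (P ** E)"
    unfolding A_def A'_def by (simp add: mm EPE' algebra_simps)
  also have "s/t - s - (s/t) * s * \<alpha> = 0" using t unfolding t_def by (simp add: field_simps)
  finally have AA: "A' ** A = mat 1" by simp
  have "B ** B' = mat 1 + (s/t - s - (s/t) * s * \<alpha>) *\<^sub>R (E ** P)"
    unfolding B_def B'_def by (simp add: mm EPE' EPE algebra_simps)
  also have "s/t - s - (s/t) * s * \<alpha> = 0" using t unfolding t_def by (simp add: field_simps)
  finally have BB: "B ** B' = mat 1" by simp
  have QA: "Q = A ** P" unfolding Q_def A_def by (simp add: mm)
  have QB: "Q = P ** B" unfolding Q_def B_def by (simp add: mm)
  have Q1: "Q ** G ** Q = A ** (P ** G ** P) ** B"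
    using QA QB by (metis matrix_mul_assoc)
  have "Q ** E ** Q = P ** E ** P + (s * s * \<alpha> * \<alpha> - 2 * s * \<alpha>) *\<^sub>R (P ** E ** P)"
    unfolding Q_def by (simp add: mm EPE' EE' algebra_simps two_m)
  also have "\<dots> = (t * t) *\<^sub>R (P ** E ** P)" unfolding t_def by (simp add: algebra_simps power2_eq_square)
  finally have Q2: "(1/d) *\<^sub>R (Q ** E ** Q) = (s * t) *\<^sub>R (P ** E ** P)" using t by simp
  have "A ** P ** B = P + (s * s * \<alpha> - 2 * s) *\<^sub>R (P ** E ** P)"
    unfolding A_def B_def by (simp add: mm EPE' algebra_simps two_m)
  hence Q3: "Q = A ** P ** B + (s * t) *\<^sub>R (P ** E ** P)"
    unfolding Q_def t_def by (simp add: algebra_simps two_m)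
  have "Q ** G ** Q + (1/d) *\<^sub>R (Q ** E ** Q) = Q \<longleftrightarrow> A ** (P ** G ** P) ** B = A ** P ** B"
    unfolding Q1 Q2 by (subst Q3) (rule add_right_cancel)
  also have "\<dots> \<longleftrightarrow> P ** G ** P = P"
  proof
    assume h: "A ** (P ** G ** P) ** B = A ** P ** B"
    have inv: "A' ** (A ** X ** B) ** B' = X" for X
    proof -
      have "A' ** (A ** X ** B) ** B' = (A' ** A) ** X ** (B ** B')" by (simp only: matrix_mul_assoc)
      thus ?thesis by (simp add: AA BB)
    qed
    have "A' ** (A ** (P ** G ** P) ** B) ** B' = A' ** (A ** P ** B) ** B'" using h by (rule arg_cong2[where f="(**)", OF arg_cong[where f="(**) A'"] refl])
    thus "P ** G ** P = P" by (simp only: inv)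
  next
    assume h: "P ** G ** P = P"
    show "A ** (P ** G ** P) ** B = A ** P ** B" by (simp only: h)
  qed
  finally show ?thesis .
qed

lemma outer_EPE:
  fixes e :: "real^'n" and P :: "real^'n^'n"
  shows "outer e e ** P ** outer e e = (e \<bullet> (P *v e)) *\<^sub>R outer e e"
proof -
  have "(outer e e ** P ** outer e e) $ i $ l = ((e \<bullet> (P *v e)) *\<^sub>R outer e e) $ i $ l" for i l
  proof -
    have S: "e \<bullet> (P *v e) = (\<Sum>j\<in>UNIV. \<Sum>k\<in>UNIV. e $ j * P $ j $ k * e $ k)"
      by (simp add: inner_vec_def matrix_vector_mult_def sum_distrib_left mult.assoc)
    have "(outer e e ** P ** outer e e) $ i $ l = (\<Sum>k\<in>UNIV. (\<Sum>j\<in>UNIV. e $ i * e $ j * P $ j $ k) * (e $ k * e $ l))"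
      by (simp add: matrix_matrix_mult_def outer_def)
    also have "\<dots> = (\<Sum>k\<in>UNIV. \<Sum>j\<in>UNIV. (e $ i * e $ l) * (e $ j * P $ j $ k * e $ k))"
      by (simp add: sum_distrib_left sum_distrib_right mult_ac)
    also have "\<dots> = (e $ i * e $ l) * (\<Sum>k\<in>UNIV. \<Sum>j\<in>UNIV. e $ j * P $ j $ k * e $ k)"
      by (simp add: sum_distrib_left)
    also have "(\<Sum>k\<in>UNIV. \<Sum>j\<in>UNIV. e $ j * P $ j $ k * e $ k) = e \<bullet> (P *v e)"
      unfolding S by (rule sum.swap)
    finally show ?thesis by (simp add: outer_def mult_ac)
  qed
  thus ?thesis by (simp add: vec_eq_iff)
qed

theorem lemma2:
  fixes X :: "(real^'k) set"
    and f :: "real^'k \<Rightarrow> real^'p"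
    and i1 :: 'p
    and l m :: nat
    and xs :: "nat \<Rightarrow> real^'k"
    and w :: "nat \<Rightarrow> real"
    and a b :: real
    and \<beta> :: "real^'p"
    and G :: "real^'p^'p"
  assumes f_const: "\<forall>x\<in>X. f x $ i1 = 1"
    and supp: "\<forall>j<l. xs j \<in> X"
    and w_nonneg: "\<forall>j<l. w j \<ge> 0"
    and w_sum: "(\<Sum>j<l. w j) = 1"
    and m_pos: "m \<ge> 1"
    and a_pos: "a > 0" and b_pos: "b > 0"
  shows "(let MP = M_Po f l xs w \<beta>; e1 = axis i1 1; M = M_PG a b m e1 MP;
              H = (b / a) *\<^sub>R G + (real m / a) *\<^sub>R outer e1 e1
          in (M ** H ** M = M \<longleftrightarrow> MP ** G ** MP = MP))"
proof -
  define P where "P = M_Po f l xs w \<beta>"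
  define e :: "real^'p" where "e = axis i1 1"
  define E where "E = outer e e"
  define \<alpha> where "\<alpha> = e \<bullet> (P *v e)"
  define d where "d = b / real m"
  have d: "d > 0" using m_pos b_pos unfolding d_def by simp
  have ee: "e \<bullet> e = 1" unfolding e_def by (simp add: inner_axis_axis)
  have EE: "E ** E = E"
    using outer_EPE[of e "mat 1"] unfolding E_def by (simp add: ee)
  have EPE: "E ** P ** E = \<alpha> *\<^sub>R E" unfolding E_def \<alpha>_def by (rule outer_EPE)
  have "\<alpha> = P $ i1 $ i1"
    unfolding \<alpha>_def e_def by (simp add: inner_vec_def matrix_vector_mult_def axis_def if_distrib if_distribR cong: if_cong)
  also have "\<dots> = (\<Sum>j<l. (w j * exp (f (xs j) \<bullet> \<beta>)) * (f (xs j) $ i1 * f (xs j) $ i1))"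
    unfolding P_def M_Po_def by (simp add: outer_def)
  also have "\<dots> \<ge> 0" using w_nonneg by (intro sum_nonneg) auto
  finally have a0: "\<alpha> \<ge> 0" .
  have c: "\<alpha> + d > 0" using a0 d by simp
  define s where "s = 1 / (\<alpha> + d)"
  define Q where "Q = P - s *\<^sub>R (P ** E ** P)"
  have K: "Q ** G ** Q + (1/d) *\<^sub>R (Q ** E ** Q) = Q \<longleftrightarrow> P ** G ** P = P"
    unfolding Q_def s_def by (rule key[OF EE EPE c d])
  have M: "M_PG a b m e P = (a / b) *\<^sub>R Q"
    unfolding M_PG_def Q_def s_def \<alpha>_def d_def E_def by simp
  have "M_PG a b m e P ** ((b / a) *\<^sub>R G + (real m / a) *\<^sub>R E) ** M_PG a b m e P
      = (a / b) *\<^sub>R (Q ** G ** Q + (1/d) *\<^sub>R (Q ** E ** Q))"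
    unfolding M using a_pos b_pos m_pos by (simp add: mm d_def)
  hence "M_PG a b m e P ** ((b / a) *\<^sub>R G + (real m / a) *\<^sub>R E) ** M_PG a b m e P = M_PG a b m e P
      \<longleftrightarrow> P ** G ** P = P"
    using K a_pos b_pos unfolding M by simp
  thus ?thesis unfolding Let_def P_def e_def E_def by simp
qed

end
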